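(* Let $s,t$ be planar trees and let $F_s^*,F_t^*$ be the dual basis elements in the graded dual $\mathrm{TSym}^*$ (whose product is the transpose of the coproduct $\Delta$ of $\mathrm{TSym}$). Then $$F_s^*\cdot F_t^*=\sum_{r:\ s\backslash t\ \le_{PT}\ r\ \le_{PT}\ s/t}F_r^*.$$
   Context: A planar tree is a rooted tree in which the children of each node are linearly ordered and every node has either no children (a leaf) or at least two children (an internal node); the one-leaf tree is allowed. If $t$ has $n+1$ leaves, $\deg t=n$; $\mathrm{ideg}(t)$ is the number of internal nodes; leaves are numbered $1,\dots,n+1$ from left to right. For $0\le i\le n$, with $P$ the path from the root to leaf $i+1$: ${}^it$ is obtained by deleting, at each internal node $v$ on $P$, the children of $v$ strictly to the right of the child on $P$ (with their subtrees) and then contracting every node with exactly one child; $t^i$ likewise deleting the children strictly to the left. The splitting is allowable if $\mathrm{ideg}({}^it)+\mathrm{ideg}(t^i)=\mathrm{ideg}(t)$. $\mathrm{TSym}$ has basis $\{F_t\}$ indexed by planar trees, with coproduct $\Delta(F_t)=\sum F_{{}^it}\otimes F_{t^i}$ over $0\le i\le\deg t$ with allowable splitting. $s/t$ is the tree obtained by identifying the root of $s$ with the leftmost leaf of $t$; $s\backslash t$ is obtained by identifying the root of $t$ with the rightmost leaf of $s$. Planar Tamari order: let $x$ be an internal node of a tree $s$ whose rightmost child $y$ is internal, with children of $x$ being $c_1,\dots,c_{a-1},y$ ($a\ge2$) and children of $y$ being $d_1,\dots,d_{b+1}$ ($b\ge1$), left to right. The left rotation of $s$ at $x$ replaces the subtree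 at $x$ by a node whose children are $z,d_2,\dots,d_{b+1}$, where $z$ is a new node with children $c_1,\dots,c_{a-1},d_1$ (all subtrees below these kept). The planar Tamari order $\le_{PT}$ on trees of a given degree is the reflexive–transitive closure of the relation "$t$ is a left rotation of $s$". *)

theory Defs
  imports Main
begin

text \<open>Planar trees: rooted trees with linearly ordered children. The datatype
  allows arbitrary nodes; well-formedness (every internal node has at least two
  children) is the predicate ptree_wf.\<close>

datatype ptree = Leaf | Node "ptree list"

fun ptree_wf :: "ptree \<Rightarrow> bool" where
  "ptree_wf Leaf = True"
| "ptree_wf (Node cs) = (2 \<le> length cs \<and> (\<forall>c\<in>set cs. ptree_wf c))"

fun leaves :: "ptree \<Rightarrow> nat" where
  "leaves Leaf = 1"
| "leaves (Node cs) = sum_list (map leaves cs)"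

definition deg :: "ptree \<Rightarrow> nat" where
  "deg t = leaves t - 1"

fun ideg :: "ptree \<Rightarrow> nat" where
  "ideg Leaf = 0"
| "ideg (Node cs) = 1 + sum_list (map ideg cs)"

text \<open>Left part  ^i t  (leaves indexed from 0 here, so index i is leaf i+1 of the
  paper): delete children strictly right of the path to leaf i, then contract
  nodes with exactly one child.  lpl processes a list of siblings.\<close>
fun lp :: "nat \<Rightarrow> ptree \<Rightarrow> ptree" and lpl :: "nat \<Rightarrow> ptree list \<Rightarrow> ptree list" where
  "lp i Leaf = Leaf"
| "lp i (Node cs) = (case lpl i cs of [c] \<Rightarrow> c | cs' \<Rightarrow> Node cs')"
| "lpl i [] = []"
| "lpl i (c # rest) =
     (if i < leaves c then [lp i c] else c # lpl (i - leaves c) rest)"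

fun rp :: "nat \<Rightarrow> ptree \<Rightarrow> ptree" and rpl :: "nat \<Rightarrow> ptree list \<Rightarrow> ptree list" where
  "rp i Leaf = Leaf"
| "rp i (Node cs) = (case rpl i cs of [c] \<Rightarrow> c | cs' \<Rightarrow> Node cs')"
| "rpl i [] = []"
| "rpl i (c # rest) =
     (if i < leaves c then rp i c # rest else rpl (i - leaves c) rest)"

definition allowable :: "nat \<Rightarrow> ptree \<Rightarrow> bool" where
  "allowable i t \<longleftrightarrow> ideg (lp i t) + ideg (rp i t) = ideg t"

text \<open>Elements of the graded dual TSym^*: functions from trees to coefficients
  (the coefficient of F_r^* ), supported on well-formed trees.  The product is the transpose of the
  coproduct Delta(F_r) = sum over allowable i of F_{^i r} (x) F_{r^i}.\<close>

definition dualb :: "ptree \<Rightarrow> ptree \<Rightarrow> int" where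
  "dualb s = (\<lambda>r. if r = s then 1 else 0)"

definition dual_prod :: "(ptree \<Rightarrow> int) \<Rightarrow> (ptree \<Rightarrow> int) \<Rightarrow> ptree \<Rightarrow> int" where
  "dual_prod f g = (\<lambda>r. if ptree_wf r then
      (\<Sum>i\<in>{0..deg r}. if allowable i r then f (lp i r) * g (rp i r) else 0)
     else 0)"

text \<open>s/t : identify root of s with leftmost leaf of t.\<close>
fun graft_left :: "ptree \<Rightarrow> ptree \<Rightarrow> ptree" where
  "graft_left s Leaf = s"
| "graft_left s (Node []) = Node []"
| "graft_left s (Node (c # cs)) = Node (graft_left s c # cs)"

definition tree_over :: "ptree \<Rightarrow> ptree \<Rightarrow> ptree" where
  "tree_over s t = graft_left s t"

text \<open>s\t : identify root of t with rightmost leaf of s.\<close>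
fun graft_right :: "ptree \<Rightarrow> ptree \<Rightarrow> ptree"
  and graft_right_l :: "ptree list \<Rightarrow> ptree \<Rightarrow> ptree list" where
  "graft_right Leaf t = t"
| "graft_right (Node cs) t = Node (graft_right_l cs t)"
| "graft_right_l [] t = []"
| "graft_right_l [c] t = [graft_right c t]"
| "graft_right_l (c # d # cs) t = c # graft_right_l (d # cs) t"

definition tree_under :: "ptree \<Rightarrow> ptree \<Rightarrow> ptree" where
  "tree_under s t = graft_right s t"

inductive lrot :: "ptree \<Rightarrow> ptree \<Rightarrow> bool" where
  rot_root: "\<lbrakk>cs \<noteq> []; 2 \<le> length ds\<rbrakk> \<Longrightarrow>
      lrot (Node (cs @ [Node ds])) (Node (Node (cs @ [hd ds]) # tl ds))"
| rot_sub: "lrot c c' \<Longrightarrow> lrot (Node (xs @ c # ys)) (Node (xs @ c' # ys))"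

definition pt_le :: "ptree \<Rightarrow> ptree \<Rightarrow> bool" where
  "pt_le s t = lrot\<^sup>*\<^sup>* s t"

end

theory Submission
  imports Defs
begin

definition contr :: "ptree list \<Rightarrow> ptree" where
  "contr l = (case l of [c] \<Rightarrow> c | _ \<Rightarrow> Node l)"

lemma lp_Node: "lp i (Node cs) = contr (lpl i cs)"
  by (simp add: contr_def split: list.split)
lemma rp_Node: "rp i (Node cs) = contr (rpl i cs)"
  by (simp add: contr_def split: list.split)
declare lp.simps(2)[simp del] rp.simps(2)[simp del]

lemma contr_single[simp]: "contr [c] = c" by (simp add: contr_def)
lemma contr_long: "2 \<le> length l \<Longrightarrow> contr l = Node l"
  by (cases l rule: remdups_adj.cases) (auto simp: contr_def)
lemma contr_cons2[simp]: "contr (a # b # l) = Node (a # b # l)"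
  by (simp add: contr_def)

abbreviation sl :: "ptree list \<Rightarrow> nat" where "sl cs \<equiv> sum_list (map leaves cs)"

lemma leaves_contr[simp]: "l \<noteq> [] \<Longrightarrow> leaves (contr l) = sl l"
  by (cases l rule: remdups_adj.cases) (auto simp: contr_def)

lemma ideg_contr: "length l \<noteq> 1 \<Longrightarrow> ideg (contr l) = 1 + sum_list (map ideg l)"
  by (cases l rule: remdups_adj.cases) (auto simp: contr_def)

lemma lpl_append: "lpl i (xs @ ys) = (if i < sl xs then lpl i xs else xs @ lpl (i - sl xs) ys)"
  by (induction xs arbitrary: i) (auto simp: algebra_simps)

lemma rpl_append: "rpl i (xs @ ys) = (if i < sl xs then rpl i xs @ ys else rpl (i - sl xs) ys)"
  by (induction xs arbitrary: i) (auto simp: algebra_simps)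

lemma lpl_beyond: "sl cs \<le> i \<Longrightarrow> lpl i cs = cs"
  by (induction cs arbitrary: i) auto

lemma rpl_beyond: "sl cs \<le> i \<Longrightarrow> rpl i cs = []"
  by (induction cs arbitrary: i) auto

lemma lpl_ne: "cs \<noteq> [] \<Longrightarrow> lpl i cs \<noteq> []"
  by (cases cs) auto

lemma rpl_ne: "i < sl cs \<Longrightarrow> rpl i cs \<noteq> []"
  by (induction cs arbitrary: i) auto

lemma leaves_pos: "ptree_wf t \<Longrightarrow> 1 \<le> leaves t"
proof (induction t)
  case Leaf then show ?case by simp
next
  case (Node cs)
  then obtain c cs' where "cs = c # cs'" by (cases cs) auto
  with Node have "1 \<le> leaves c" by simp
  with \<open>cs = c # cs'\<close> show ?case by simp
qed

lemma leaves_lp_aux: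
  shows "i < leaves t \<Longrightarrow> leaves (lp i t) = i + 1" and "i < sl cs \<Longrightarrow> sl (lpl i cs) = i + 1"
proof (induction i t and i cs rule: lp_lpl.induct)
  case (2 i cs)
  then have a: "i < sl cs" by simp
  then have "cs \<noteq> []" by auto
  then have "lpl i cs \<noteq> []" by (rule lpl_ne)
  with 2 a show ?case by (simp add: lp_Node)
qed auto

lemma leaves_lp: "i < leaves t \<Longrightarrow> leaves (lp i t) = i + 1"
  by (rule leaves_lp_aux(1))

lemma contr_app: "xs \<noteq> [] \<Longrightarrow> contr (xs @ y # ys) = Node (xs @ y # ys)"
  by (cases xs) (auto simp: contr_def split: list.split)

lemma contr_cons_ne: "ys \<noteq> [] \<Longrightarrow> contr (y # ys) = Node (y # ys)"
  by (cases ys) auto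

lemma lrot_leaves: "lrot a b \<Longrightarrow> leaves a = leaves b"
proof (induction rule: lrot.induct)
  case (rot_root cs ds)
  then obtain d1 ds' where "ds = d1 # ds'" by (cases ds) auto
  then show ?case by simp
qed simp

lemma lrot_ideg: "lrot a b \<Longrightarrow> ideg a = ideg b"
proof (induction rule: lrot.induct)
  case (rot_root cs ds)
  then obtain d1 ds' where "ds = d1 # ds'" by (cases ds) auto
  then show ?case by simp
qed simp

lemma contr_lrot: "lrot c c' \<Longrightarrow> lrot (contr (xs @ c # ys)) (contr (xs @ c' # ys))"
proof (cases "xs = [] \<and> ys = []")
  case True
  assume "lrot c c'"
  with True show ?thesis by simp
next
  case False
  assume "lrot c c'"
  then have "lrot (Node (xs @ c # ys)) (Node (xs @ c' # ys))" by (rule lrot.rot_sub)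
  moreover have "2 \<le> length (xs @ c # ys)" "2 \<le> length (xs @ c' # ys)" using False
    by (cases xs; cases ys; auto)+
  ultimately show ?thesis by (simp add: contr_long)
qed

lemma lrot_lp: "lrot a b \<Longrightarrow> lp i a = lp i b \<or> lrot (lp i a) (lp i b)"
proof (induction arbitrary: i rule: lrot.induct)
  case (rot_root cs ds)
  then obtain d1 ds' where ds: "ds = d1 # ds'" "ds' \<noteq> []"
    by (cases ds) (auto simp: Suc_le_length_iff)
  have cs: "cs \<noteq> []" by fact
  show ?case
  proof (cases "i < sl cs")
    case True
    then show ?thesis using ds by (simp add: lp_Node lpl_append)
  next
    case False
    show ?thesis
    proof (cases "i - sl cs < leaves d1")
      case True
      then have "i < sl cs + leaves d1" using False by linarith
      then show ?thesis using True ds False cs by (simp add: lp_Node lpl_append contr_app)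
    next
      case F2: False
      have ge: "\<not> i < sl cs + leaves d1" using False F2 by linarith
      have ne: "lpl (i - sl cs - leaves d1) ds' \<noteq> []" using ds lpl_ne by blast
      have "lp i (Node (cs @ [Node ds])) = Node (cs @ [Node (d1 # lpl (i - sl cs - leaves d1) ds')])"
        using ds False F2 cs ne by (cases "i - sl cs < leaves (Node ds)") (simp_all add: lp_Node lpl_append contr_app contr_cons_ne lpl_beyond)
      moreover have "lp i (Node (Node (cs @ [hd ds]) # tl ds)) = Node (Node (cs @ [d1]) # lpl (i - sl cs - leaves d1) ds')"
        using ds ge cs ne by (simp add: lp_Node lpl_append contr_app contr_cons_ne diff_diff_add)
      moreover have "lrot (Node (cs @ [Node (d1 # lpl (i - sl cs - leaves d1) ds')])) (Node (Node (cs @ [d1]) # lpl (i - sl cs - leaves d1) ds'))"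
        using lrot.rot_root[OF cs, of "d1 # lpl (i - sl cs - leaves d1) ds'"] ne by (cases "lpl (i - sl cs - leaves d1) ds'") auto
      ultimately show ?thesis by simp
    qed
  qed
next
  case (rot_sub c c' xs ys)
  have lc: "leaves c = leaves c'" using rot_sub.hyps by (rule lrot_leaves)
  show ?case
  proof (cases "i < sl xs")
    case True
    then show ?thesis by (simp add: lp_Node lpl_append)
  next
    case False
    show ?thesis
    proof (cases "i - sl xs < leaves c")
      case True
      show ?thesis
      proof (cases "xs = []")
        case True
        then show ?thesis using rot_sub.IH[of i] \<open>i - sl xs < leaves c\<close> lc by (simp add: lp_Node)
      next
        case xne: False
        have "lp i (Node (xs @ c # ys)) = Node (xs @ [lp (i - sl xs) c])"
          using False True xne by (simp add: lp_Node lpl_append contr_app)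
        moreover have "lp i (Node (xs @ c' # ys)) = Node (xs @ [lp (i - sl xs) c'])"
          using False True xne lc by (simp add: lp_Node lpl_append contr_app)
        ultimately show ?thesis using rot_sub.IH[of "i - sl xs"] lrot.rot_sub[of "lp (i - sl xs) c" "lp (i - sl xs) c'" xs "[]"]
          by auto
      qed
    next
      case F2: False
      then show ?thesis using False lc contr_lrot[OF rot_sub.hyps]
        by (simp add: lp_Node lpl_append)
    qed
  qed
qed

lemma lrot_rp: "lrot a b \<Longrightarrow> rp i a = rp i b \<or> lrot (rp i a) (rp i b)"
proof (induction arbitrary: i rule: lrot.induct)
  case (rot_root cs ds)
  then obtain d1 ds' where ds: "ds = d1 # ds'" "ds' \<noteq> []"
    by (cases ds) (auto simp: Suc_le_length_iff)
  have cs: "cs \<noteq> []" by fact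
  show ?case
  proof (cases "i < sl cs")
    case True
    have ne: "rpl i cs \<noteq> []" using True by (rule rpl_ne)
    have "i < sl cs + leaves d1" using True by linarith
    then have "rp i (Node (Node (cs @ [hd ds]) # tl ds)) = Node (Node (rpl i cs @ [d1]) # ds')"
      using ds True ne by (simp add: rp_Node rpl_append contr_app contr_cons_ne)
    moreover have "rp i (Node (cs @ [Node ds])) = Node (rpl i cs @ [Node (d1 # ds')])"
      using ds True ne by (simp add: rp_Node rpl_append contr_app)
    moreover have "lrot (Node (rpl i cs @ [Node (d1 # ds')])) (Node (Node (rpl i cs @ [d1]) # ds'))"
      using lrot.rot_root[OF ne, of "d1 # ds'"] ds by (cases ds') auto
    ultimately show ?thesis by simp
  next
    case False
    show ?thesis
    proof (cases "i - sl cs < leaves d1")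
      case True
      then have "i < sl cs + leaves d1" using False by linarith
      then show ?thesis using True ds False cs by (simp add: rp_Node rpl_append contr_cons_ne)
    next
      case F2: False
      have ge: "\<not> i < sl cs + leaves d1" using False F2 by linarith
      show ?thesis using ds ge False F2
        by (cases "i - sl cs < leaves (Node ds)")
          (simp_all add: rp_Node rpl_append rpl_beyond diff_diff_add)
    qed
  qed
next
  case (rot_sub c c' xs ys)
  have lc: "leaves c = leaves c'" using rot_sub.hyps by (rule lrot_leaves)
  show ?case
  proof (cases "i < sl xs")
    case True
    then show ?thesis using contr_lrot[OF rot_sub.hyps, of "rpl i xs" ys]
      by (simp add: rp_Node rpl_append)
  next
    case False
    show ?thesis
    proof (cases "i - sl xs < leaves c")
      case True
      then show ?thesis using False lc rot_sub.IH[of "i - sl xs"] contr_lrot[of "rp (i - sl xs) c" "rp (i - sl xs) c'" "[]" ys]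
        by (auto simp: rp_Node rpl_append)
    next
      case F2: False
      then show ?thesis using False lc by (simp add: rp_Node rpl_append)
    qed
  qed
qed

lemma pt_le_refl: "pt_le a a" by (simp add: pt_le_def)
lemma pt_le_trans: "pt_le a b \<Longrightarrow> pt_le b c \<Longrightarrow> pt_le a c"
  unfolding pt_le_def by (rule rtranclp_trans)
lemma pt_le_step: "lrot a b \<Longrightarrow> pt_le a b"
  unfolding pt_le_def by blast

lemma pt_le_lp: "pt_le a b \<Longrightarrow> pt_le (lp i a) (lp i b)"
  unfolding pt_le_def
proof (induction rule: rtranclp_induct)
  case (step y z)
  from lrot_lp[OF step.hyps(2), of i] step.IH show ?case by auto
qed simp

lemma pt_le_rp: "pt_le a b \<Longrightarrow> pt_le (rp i a) (rp i b)"
  unfolding pt_le_def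
proof (induction rule: rtranclp_induct)
  case (step y z)
  from lrot_rp[OF step.hyps(2), of i] step.IH show ?case by auto
qed simp

lemma pt_le_leaves: "pt_le a b \<Longrightarrow> leaves a = leaves b"
  unfolding pt_le_def by (induction rule: rtranclp_induct) (auto dest: lrot_leaves)

lemma pt_le_ideg: "pt_le a b \<Longrightarrow> ideg a = ideg b"
  unfolding pt_le_def by (induction rule: rtranclp_induct) (auto dest: lrot_ideg)

fun sz :: "ptree \<Rightarrow> nat" where
  "sz Leaf = 1"
| "sz (Node cs) = 1 + sum_list (map sz cs)"

fun phi :: "ptree \<Rightarrow> nat" where
  "phi Leaf = 0"
| "phi (Node cs) = (case cs of [] \<Rightarrow> 0 | c # _ \<Rightarrow> sz c) + sum_list (map phi cs)"

lemma lrot_sz: "lrot a b \<Longrightarrow> sz a = sz b"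
proof (induction rule: lrot.induct)
  case (rot_root cs ds)
  then obtain d1 ds' where "ds = d1 # ds'" by (cases ds) auto
  then show ?case by simp
qed simp

lemma sz_pos: "0 < sz t" by (cases t) auto

lemma lrot_phi: "lrot a b \<Longrightarrow> phi a < phi b"
proof (induction rule: lrot.induct)
  case (rot_root cs ds)
  then obtain d1 ds' where ds: "ds = d1 # ds'" by (cases ds) auto
  obtain c cs' where cs: "cs = c # cs'" using rot_root by (cases cs) auto
  show ?case using ds cs by simp
next
  case (rot_sub c c' xs ys)
  have "sz c = sz c'" using rot_sub.hyps by (rule lrot_sz)
  then show ?case using rot_sub.IH by (cases xs) auto
qed

lemma pt_le_phi: "pt_le a b \<Longrightarrow> a = b \<or> phi a < phi b"
  unfolding pt_le_def
proof (induction rule: rtranclp_induct)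
  case (step y z)
  from lrot_phi[OF step.hyps(2)] step.IH show ?case by auto
qed simp

lemma pt_le_antisym: "pt_le a b \<Longrightarrow> pt_le b a \<Longrightarrow> a = b"
proof -
  assume "pt_le a b" "pt_le b a"
  from pt_le_phi[OF this(1)] pt_le_phi[OF this(2)] show "a = b" by auto
qed

lemma pt_le_cong: "pt_le c c' \<Longrightarrow> pt_le (Node (xs @ c # ys)) (Node (xs @ c' # ys))"
  unfolding pt_le_def
proof (induction rule: rtranclp_induct)
  case (step y z)
  then show ?case using lrot.rot_sub[OF step.hyps(2), of xs ys] by (meson rtranclp.rtrancl_into_rtrancl)
qed simp

lemma grl_snoc: "graft_right_l (xs @ [x]) t = xs @ [graft_right x t]"
proof (induction xs)
  case (Cons a xs)
  then show ?case by (cases xs) auto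
qed simp

lemma wf_snoc: "ptree_wf (Node cs) \<Longrightarrow> \<exists>xs l. cs = xs @ [l] \<and> xs \<noteq> []"
  by (rule exI[of _ "butlast cs"], rule exI[of _ "last cs"]) (cases cs rule: rev_cases; auto)

lemma wf_cons: "ptree_wf (Node cs) \<Longrightarrow> \<exists>c rest. cs = c # rest \<and> rest \<noteq> []"
  by (cases cs) auto

lemma sl_pos: "\<forall>c\<in>set cs. ptree_wf c \<Longrightarrow> length cs \<le> sl cs"
proof (induction cs)
  case (Cons a cs)
  then show ?case using leaves_pos[of a] by auto
qed simp

lemma lp_self: "ptree_wf s \<Longrightarrow> lp (leaves s - 1) s = s \<and> rp (leaves s - 1) s = Leaf"
proof (induction s)
  case (Node cs)
  obtain xs l where cs: "cs = xs @ [l]" "xs \<noteq> []" using wf_snoc[OF Node.prems] by blast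
  have wl: "ptree_wf l" using Node.prems cs by simp
  have l1: "1 \<le> leaves l" using leaves_pos[OF wl] .
  have IH: "lp (leaves l - 1) l = l \<and> rp (leaves l - 1) l = Leaf" using Node.IH[of l] cs wl by simp
  have "\<not> sl xs + leaves l - 1 < sl xs" using l1 by linarith
  moreover have "sl xs + leaves l - 1 - sl xs = leaves l - 1" using l1 by linarith
  moreover have "leaves l - 1 < leaves l" using l1 by linarith
  ultimately show ?case using cs IH by (simp add: lp_Node rp_Node lpl_append rpl_append contr_app)
qed simp

lemma lp0: "ptree_wf t \<Longrightarrow> lp 0 t = Leaf \<and> rp 0 t = t"
proof (induction t)
  case (Node cs)
  obtain c rest where cs: "cs = c # rest" "rest \<noteq> []" using wf_cons[OF Node.prems] by blast
  have wc: "ptree_wf c" using Node.prems cs by simp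
  have "0 < leaves c" using leaves_pos[OF wc] by linarith
  then show ?case using cs Node.IH[of c] wc by (simp add: lp_Node rp_Node contr_cons_ne)
qed simp

lemma leaves_gr: "ptree_wf s \<Longrightarrow> 1 \<le> leaves t \<Longrightarrow> leaves (graft_right s t) = leaves s + leaves t - 1"
proof (induction s)
  case (Node cs)
  obtain xs l where cs: "cs = xs @ [l]" "xs \<noteq> []" using wf_snoc[OF Node.prems(1)] by blast
  have wl: "ptree_wf l" using Node.prems cs by simp
  have l1: "1 \<le> leaves l" using leaves_pos[OF wl] .
  show ?case using cs Node.IH[of l] wl Node.prems l1 by (simp add: grl_snoc)
qed simp

lemma leaves_gl: "ptree_wf t \<Longrightarrow> 1 \<le> leaves s \<Longrightarrow> leaves (graft_left s t) = leaves s + leaves t - 1"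
proof (induction t)
  case (Node cs)
  obtain c rest where cs: "cs = c # rest" "rest \<noteq> []" using wf_cons[OF Node.prems(1)] by blast
  have wc: "ptree_wf c" using Node.prems cs by simp
  have l1: "1 \<le> leaves c" using leaves_pos[OF wc] .
  have "1 \<le> sl rest" using sl_pos[of rest] Node.prems cs by (cases rest) auto
  then show ?case using cs Node.IH[of c] wc Node.prems l1 by simp
qed simp

lemma ideg_gr: "ptree_wf s \<Longrightarrow> ideg (graft_right s t) = ideg s + ideg t"
proof (induction s)
  case (Node cs)
  obtain xs l where cs: "cs = xs @ [l]" "xs \<noteq> []" using wf_snoc[OF Node.prems(1)] by blast
  have wl: "ptree_wf l" using Node.prems cs by simp
  show ?case using cs Node.IH[of l] wl by (simp add: grl_snoc)
qed simp

lemma ideg_gl: "ptree_wf t \<Longrightarrow> ideg (graft_left s t) = ideg s + ideg t"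
proof (induction t)
  case (Node cs)
  obtain c rest where cs: "cs = c # rest" "rest \<noteq> []" using wf_cons[OF Node.prems(1)] by blast
  have wc: "ptree_wf c" using Node.prems cs by simp
  show ?case using cs Node.IH[of c] wc by simp
qed simp

lemma lp_gr: "ptree_wf s \<Longrightarrow> ptree_wf t \<Longrightarrow>
   lp (leaves s - 1) (graft_right s t) = s \<and> rp (leaves s - 1) (graft_right s t) = t"
proof (induction s)
  case Leaf then show ?case using lp0 by simp
next
  case (Node cs)
  obtain xs l where cs: "cs = xs @ [l]" "xs \<noteq> []" using wf_snoc[OF Node.prems(1)] by blast
  have wl: "ptree_wf l" using Node.prems cs by simp
  have l1: "1 \<le> leaves l" using leaves_pos[OF wl] .
  have t1: "1 \<le> leaves t" using leaves_pos[OF Node.prems(2)] .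
  have IH: "lp (leaves l - 1) (graft_right l t) = l \<and> rp (leaves l - 1) (graft_right l t) = t"
    using Node.IH[of l] cs wl Node.prems by simp
  have lg: "leaves (graft_right l t) = leaves l + leaves t - 1" using leaves_gr[OF wl t1] .
  have "\<not> sl xs + leaves l - 1 < sl xs" using l1 by linarith
  moreover have "sl xs + leaves l - 1 - sl xs = leaves l - 1" using l1 by linarith
  moreover have "leaves l - 1 < leaves (graft_right l t)" using l1 t1 lg by linarith
  ultimately show ?case using cs IH by (simp add: lp_Node rp_Node lpl_append rpl_append contr_app grl_snoc)
qed

lemma lp_gl: "ptree_wf s \<Longrightarrow> ptree_wf t \<Longrightarrow>
   lp (leaves s - 1) (graft_left s t) = s \<and> rp (leaves s - 1) (graft_left s t) = t"
proof (induction t)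
  case Leaf then show ?case using lp_self by simp
next
  case (Node cs)
  obtain c rest where cs: "cs = c # rest" "rest \<noteq> []" using wf_cons[OF Node.prems(2)] by blast
  have wc: "ptree_wf c" using Node.prems cs by simp
  have l1: "1 \<le> leaves c" using leaves_pos[OF wc] .
  have s1: "1 \<le> leaves s" using leaves_pos[OF Node.prems(1)] .
  have IH: "lp (leaves s - 1) (graft_left s c) = s \<and> rp (leaves s - 1) (graft_left s c) = c"
    using Node.IH[of c] cs wc Node.prems by simp
  have "leaves s - 1 < leaves (graft_left s c)" using leaves_gl[OF wc s1] l1 s1 by linarith
  then show ?case using cs IH by (simp add: lp_Node rp_Node contr_cons_ne)
qed

lemma wf_contr: "l \<noteq> [] \<Longrightarrow> \<forall>c\<in>set l. ptree_wf c \<Longrightarrow> ptree_wf (contr l)"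
  by (cases l rule: remdups_adj.cases) (auto simp: contr_def)

lemma wf_lp_aux:
  shows "ptree_wf t \<Longrightarrow> ptree_wf (lp i t)"
    and "\<forall>c\<in>set cs. ptree_wf c \<Longrightarrow> \<forall>c\<in>set (lpl i cs). ptree_wf c"
proof (induction i t and i cs rule: lp_lpl.induct)
  case (2 i cs)
  then have "cs \<noteq> []" by auto
  then show ?case using 2 lpl_ne[of cs i] by (simp add: lp_Node wf_contr)
qed auto

lemma wf_rp_aux:
  shows "ptree_wf t \<Longrightarrow> i < leaves t \<Longrightarrow> ptree_wf (rp i t)"
    and "\<forall>c\<in>set cs. ptree_wf c \<Longrightarrow> i < sl cs \<Longrightarrow> \<forall>c\<in>set (rpl i cs). ptree_wf c"
proof (induction i t and i cs rule: lp_lpl.induct)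
  case (2 i cs)
  then show ?case using rpl_ne[of i cs] by (simp add: rp_Node wf_contr)
qed auto

lemma dec: "i < sl cs \<Longrightarrow> \<exists>xs c ys. cs = xs @ c # ys \<and> sl xs \<le> i \<and> i < sl xs + leaves c"
proof (induction cs arbitrary: i)
  case (Cons a cs)
  show ?case
  proof (cases "i < leaves a")
    case True
    then show ?thesis by (intro exI[of _ "[]"]) auto
  next
    case False
    have "i - leaves a < sl cs" using Cons.prems False by simp
    from Cons.IH[OF this] obtain xs c ys where
      h: "cs = xs @ c # ys" "sl xs \<le> i - leaves a" "i - leaves a < sl xs + leaves c"
      by blast
    have "a # cs = (a # xs) @ c # ys" using h by simp
    moreover have "sl (a # xs) \<le> i" using h False by simp
    moreover have "i < sl (a # xs) + leaves c" using h False by simp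
    ultimately show ?thesis by blast
  qed
qed simp

lemma dec_lp: "sl xs \<le> i \<Longrightarrow> i < sl xs + leaves c \<Longrightarrow>
  lpl i (xs @ c # ys) = xs @ [lp (i - sl xs) c] \<and> rpl i (xs @ c # ys) = rp (i - sl xs) c # ys"
proof -
  assume a: "sl xs \<le> i" "i < sl xs + leaves c"
  then have "\<not> i < sl xs" "i - sl xs < leaves c" by linarith+
  then show ?thesis by (simp add: lpl_append rpl_append)
qed

lemma ideg_contr1: "ideg (contr (xs @ [x])) = (if xs = [] then ideg x else 1 + sum_list (map ideg xs) + ideg x)"
  by (cases "xs = []") (simp_all add: contr_app)

lemma ideg_contr2: "ideg (contr (x # ys)) = (if ys = [] then ideg x else 1 + ideg x + sum_list (map ideg ys))"
  by (cases ys) auto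

lemma ideg_ge: "ptree_wf r \<Longrightarrow> i < leaves r \<Longrightarrow> ideg r \<le> ideg (lp i r) + ideg (rp i r)"
proof (induction r arbitrary: i)
  case (Node cs)
  then obtain xs c ys where d: "cs = xs @ c # ys" "sl xs \<le> i" "i < sl xs + leaves c"
    using dec[of i cs] by auto
  have wc: "ptree_wf c" using Node.prems d by simp
  have IH: "ideg c \<le> ideg (lp (i - sl xs) c) + ideg (rp (i - sl xs) c)"
    using Node.IH[of c "i - sl xs"] d wc by auto
  have ne: "\<not> (xs = [] \<and> ys = [])" using Node.prems d by auto
  show ?case using dec_lp[OF d(2,3), of ys] d IH ne
    by (cases "xs = []") (simp_all add: lp_Node rp_Node ideg_contr1 ideg_contr2)
qed simp

lemma lemR: "ptree_wf S \<Longrightarrow> ys \<noteq> [] \<Longrightarrow>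
   pt_le (graft_right S (Node (u # ys))) (Node (graft_right S u # ys))"
proof (induction S)
  case Leaf then show ?case by (simp add: pt_le_refl)
next
  case (Node cs)
  obtain xs l where cs: "cs = xs @ [l]" "xs \<noteq> []" using wf_snoc[OF Node.prems(1)] by blast
  have wl: "ptree_wf l" using Node.prems cs by simp
  have "pt_le (graft_right l (Node (u # ys))) (Node (graft_right l u # ys))"
    using Node.IH[of l] cs wl Node.prems by simp
  then have 1: "pt_le (Node (xs @ [graft_right l (Node (u # ys))])) (Node (xs @ [Node (graft_right l u # ys)]))"
    using pt_le_cong by blast
  have 2: "lrot (Node (xs @ [Node (graft_right l u # ys)])) (Node (Node (xs @ [graft_right l u]) # ys))"
    using lrot.rot_root[OF cs(2), of "graft_right l u # ys"] Node.prems(2) by (cases ys) auto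
  show ?case using pt_le_trans[OF 1 pt_le_step[OF 2]] cs by (simp add: grl_snoc)
qed

lemma lemL: "xs \<noteq> [] \<Longrightarrow> ptree_wf T \<Longrightarrow>
   pt_le (Node (xs @ [graft_left u T])) (graft_left (Node (xs @ [u])) T)"
proof (induction T)
  case Leaf then show ?case by (simp add: pt_le_refl)
next
  case (Node cs)
  obtain c rest where cs: "cs = c # rest" "rest \<noteq> []" using wf_cons[OF Node.prems(2)] by blast
  have wc: "ptree_wf c" using Node.prems cs by simp
  have "pt_le (Node (xs @ [graft_left u c])) (graft_left (Node (xs @ [u])) c)"
    using Node.IH[of c] cs wc Node.prems by simp
  then have 1: "pt_le (Node (Node (xs @ [graft_left u c]) # rest)) (Node (graft_left (Node (xs @ [u])) c # rest))"
    using pt_le_cong[of _ _ "[]"] by simp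
  have 2: "lrot (Node (xs @ [Node (graft_left u c # rest)])) (Node (Node (xs @ [graft_left u c]) # rest))"
    using lrot.rot_root[OF Node.prems(1), of "graft_left u c # rest"] cs by (cases rest) auto
  show ?case using pt_le_trans[OF pt_le_step[OF 2] 1] cs by simp
qed

lemma dirA: "ptree_wf r \<Longrightarrow> i < leaves r \<Longrightarrow> ideg (lp i r) + ideg (rp i r) = ideg r \<Longrightarrow>
  pt_le (graft_right (lp i r) (rp i r)) r \<and> pt_le r (graft_left (lp i r) (rp i r))"
proof (induction r arbitrary: i)
  case Leaf then show ?case by (simp add: pt_le_refl)
next
  case (Node cs)
  then obtain xs c ys where d: "cs = xs @ c # ys" "sl xs \<le> i" "i < sl xs + leaves c"
    using dec[of i cs] by auto
  define j where "j = i - sl xs"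
  have jc: "j < leaves c" using d j_def by linarith
  have wc: "ptree_wf c" using Node.prems d by simp
  have LP: "lp i (Node cs) = contr (xs @ [lp j c])" and RP: "rp i (Node cs) = contr (rp j c # ys)"
    using dec_lp[OF d(2,3), of ys] d j_def by (simp_all add: lp_Node rp_Node)
  have ige: "ideg c \<le> ideg (lp j c) + ideg (rp j c)" using ideg_ge[OF wc jc] .
  have ne: "\<not> (xs = [] \<and> ys = [])" using Node.prems d by auto
  have wS: "ptree_wf (lp j c)" using wf_lp_aux(1)[OF wc] .
  have wT: "ptree_wf (rp j c)" using wf_rp_aux(1)[OF wc jc] .
  show ?case
  proof (cases "xs = []")
    case True
    then have ys: "ys \<noteq> []" using ne by simp
    have al: "ideg (lp j c) + ideg (rp j c) = ideg c"
      using Node.prems(3) LP RP True ys d by (simp add: ideg_contr1 ideg_contr2)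
    have IH: "pt_le (graft_right (lp j c) (rp j c)) c \<and> pt_le c (graft_left (lp j c) (rp j c))"
      using Node.IH[of c j] d wc jc al by simp
    have r: "Node cs = Node ([] @ c # ys)" using d True by simp
    have c1: "pt_le (Node (graft_right (lp j c) (rp j c) # ys)) (Node (c # ys))"
      using pt_le_cong[of _ _ "[]" ys, OF IH[THEN conjunct1]] by simp
    have g1: "pt_le (graft_right (lp j c) (Node (rp j c # ys))) (Node cs)"
      using pt_le_trans[OF lemR[OF wS ys] c1] r by simp
    have g2: "pt_le (Node cs) (graft_left (lp j c) (Node (rp j c # ys)))"
      using pt_le_cong[of _ _ "[]" ys, OF IH[THEN conjunct2]] r by simp
    show ?thesis using g1 g2 LP RP True ys by (simp add: contr_cons_ne)
  next
    case False
    then have ys: "ys = []" using Node.prems(3) LP RP ige d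
      by (cases "ys = []") (simp_all add: ideg_contr1 ideg_contr2)
    have al: "ideg (lp j c) + ideg (rp j c) = ideg c"
      using Node.prems(3) LP RP False ys d by (simp add: ideg_contr1 ideg_contr2)
    have IH: "pt_le (graft_right (lp j c) (rp j c)) c \<and> pt_le c (graft_left (lp j c) (rp j c))"
      using Node.IH[of c j] d wc jc al by simp
    have r: "Node cs = Node (xs @ c # [])" using d ys by simp
    have g1: "pt_le (graft_right (Node (xs @ [lp j c])) (rp j c)) (Node cs)"
      using pt_le_cong[of _ _ xs "[]", OF IH[THEN conjunct1]] r by (simp add: grl_snoc)
    have c2: "pt_le (Node (xs @ [c])) (Node (xs @ [graft_left (lp j c) (rp j c)]))"
      using pt_le_cong[of _ _ xs "[]", OF IH[THEN conjunct2]] by simp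
    have g2: "pt_le (Node cs) (graft_left (Node (xs @ [lp j c])) (rp j c))"
      using pt_le_trans[OF c2 lemL[OF False wT]] r by simp
    show ?thesis using g1 g2 LP RP False ys by (simp add: contr_app)
  qed
qed

theorem mainTheorem3:
  assumes "ptree_wf s" and "ptree_wf t"
  shows "dual_prod (dualb s) (dualb t) =
    (\<lambda>r. if ptree_wf r \<and> pt_le (tree_under s t) r \<and> pt_le r (tree_over s t) then 1 else 0)"
proof (rule ext)
  fix r
  have ws: "ptree_wf s" and wt: "ptree_wf t" by fact+
  have s1: "1 \<le> leaves s" using leaves_pos[OF ws] .
  have t1: "1 \<le> leaves t" using leaves_pos[OF wt] .
  show "dual_prod (dualb s) (dualb t) r =
    (if ptree_wf r \<and> pt_le (tree_under s t) r \<and> pt_le r (tree_over s t) then 1 else 0)"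
  proof (cases "ptree_wf r")
    case False
    then show ?thesis by (simp add: dual_prod_def)
  next
    case wr: True
    have r1: "1 \<le> leaves r" using leaves_pos[OF wr] .
    define i0 where "i0 = leaves s - 1"
    define Q where "Q = (allowable i0 r \<and> lp i0 r = s \<and> rp i0 r = t)"
    have tm: "(if allowable i r then dualb s (lp i r) * dualb t (rp i r) else 0)
        = (if i = i0 then (if Q then 1 else 0) else (0::int))" if "i \<in> {0..deg r}" for i
    proof -
      have "i < leaves r" using that r1 by (simp add: deg_def)
      then have "lp i r = s \<Longrightarrow> i = i0" using leaves_lp[of i r] i0_def by auto
      note eq = this
      show ?thesis
      proof (cases "allowable i r \<and> lp i r = s \<and> rp i r = t")
        case True
        then have "i = i0" using eq by blast
        with True show ?thesis by (simp add: Q_def dualb_def)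
      next
        case False
        have l: "(if allowable i r then dualb s (lp i r) * dualb t (rp i r) else 0) = 0"
          using False unfolding dualb_def by (cases "allowable i r") (auto split: if_splits)
        have "i = i0 \<Longrightarrow> \<not> Q" using False unfolding Q_def by blast
        then show ?thesis using l by simp
      qed
    qed
    have sA: "(\<Sum>i\<in>{0..deg r}. (if allowable i r then dualb s (lp i r) * dualb t (rp i r) else 0))
        = (\<Sum>i\<in>{0..deg r}. (if i = i0 then (if Q then 1 else 0) else (0::int)))"
      by (rule sum.cong[OF refl]) (rule tm)
    have sB: "(\<Sum>i\<in>{0..deg r}. (if i = i0 then (if Q then 1 else 0) else (0::int)))
        = (if i0 \<in> {0..deg r} then (if Q then 1 else 0) else 0)"
      by (rule sum.delta) simp
    have sum: "dual_prod (dualb s) (dualb t) r = (if i0 \<le> deg r \<and> Q then 1 else 0)"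
      unfolding dual_prod_def using wr sA sB by simp
    have key: "(i0 \<le> deg r \<and> Q) \<longleftrightarrow> (pt_le (tree_under s t) r \<and> pt_le r (tree_over s t))"
    proof
      assume a: "i0 \<le> deg r \<and> Q"
      then have "i0 < leaves r" using r1 unfolding deg_def by linarith
      note lt = this
      have aa: "ideg (lp i0 r) + ideg (rp i0 r) = ideg r" "lp i0 r = s" "rp i0 r = t"
        using a unfolding Q_def allowable_def by auto
      have "pt_le (graft_right (lp i0 r) (rp i0 r)) r \<and> pt_le r (graft_left (lp i0 r) (rp i0 r))"
        by (rule dirA[OF wr lt aa(1)])
      then show "pt_le (tree_under s t) r \<and> pt_le r (tree_over s t)"
        unfolding tree_under_def tree_over_def aa(2,3) .
    next
      assume a: "pt_le (tree_under s t) r \<and> pt_le r (tree_over s t)"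
      then have a1: "pt_le (graft_right s t) r" and a2: "pt_le r (graft_left s t)"
        unfolding tree_under_def tree_over_def by auto
      have lr: "leaves r = leaves s + leaves t - 1"
        using pt_le_leaves[OF a1] leaves_gr[OF ws t1] by simp
      have "i0 < leaves r" using lr i0_def s1 t1 by linarith
      then have i0d: "i0 \<le> deg r" by (simp add: deg_def)
      have gr: "lp i0 (graft_right s t) = s" "rp i0 (graft_right s t) = t"
        using lp_gr[OF ws wt] i0_def by auto
      have gl: "lp i0 (graft_left s t) = s" "rp i0 (graft_left s t) = t"
        using lp_gl[OF ws wt] i0_def by auto
      have L1: "pt_le (lp i0 r) s" using pt_le_lp[OF a2, of i0] gl by simp
      have L2: "pt_le s (lp i0 r)" using pt_le_lp[OF a1, of i0] gr by simp
      have R1: "pt_le (rp i0 r) t" using pt_le_rp[OF a2, of i0] gl by simp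
      have R2: "pt_le t (rp i0 r)" using pt_le_rp[OF a1, of i0] gr by simp
      have L: "lp i0 r = s" using pt_le_antisym[OF L1 L2] .
      have R: "rp i0 r = t" using pt_le_antisym[OF R1 R2] .
      have "ideg r = ideg s + ideg t" using pt_le_ideg[OF a1] ideg_gr[OF ws] by simp
      then have "allowable i0 r" using L R by (simp add: allowable_def)
      then show "i0 \<le> deg r \<and> Q" using i0d L R Q_def by simp
    qed
    show ?thesis using sum key wr by simp
  qed
qed

end
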